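(* The Petersen graph has ID-index $3$.
   Context: For a finite simple connected graph $G=(V,E)$ with diameter $d$, a rank assignment is a function $f:V\to\mathbb{R}$; under $f$, the string of a vertex $v$ is the $d$-vector whose $i$-th coordinate is the sum of $f(w)$ over all vertices $w$ with $d(v,w)=i$. The ID-index $IDI(G)$ is the minimum $k$ such that there exists $f:V\to\mathbb{R}$ with $|f(V)|=k$ under which all vertices have distinct strings. *)

theory Defs
  imports Complex_Main
begin

definition simple_graph :: "'a set \<Rightarrow> ('a \<times> 'a) set \<Rightarrow> bool" where
  "simple_graph V E \<longleftrightarrow> finite V \<and> E \<subseteq> V \<times> V \<and> sym E \<and> irrefl E"

definition connected_graph :: "'a set \<Rightarrow> ('a \<times> 'a) set \<Rightarrow> bool" where
  "connected_graph V E \<longleftrightarrow> V \<noteq> {} \<and> (\<forall>u\<in>V. \<forall>v\<in>V. (u, v) \<in> E\<^sup>*)"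

definition gdist :: "('a \<times> 'a) set \<Rightarrow> 'a \<Rightarrow> 'a \<Rightarrow> nat" where
  "gdist E u v = (LEAST n. (u, v) \<in> E ^^ n)"

definition diameter :: "'a set \<Rightarrow> ('a \<times> 'a) set \<Rightarrow> nat" where
  "diameter V E = Max {gdist E u v | u v. u \<in> V \<and> v \<in> V}"

definition vstring :: "'a set \<Rightarrow> ('a \<times> 'a) set \<Rightarrow> ('a \<Rightarrow> real) \<Rightarrow> 'a \<Rightarrow> real list" where
  "vstring V E f v = map (\<lambda>i. \<Sum>w\<in>{w\<in>V. gdist E v w = i}. f w) [1..<diameter V E + 1]"

definition IDI :: "'a set \<Rightarrow> ('a \<times> 'a) set \<Rightarrow> nat" where
  "IDI V E = (LEAST k. \<exists>f :: 'a \<Rightarrow> real. card (f ` V) = k \<and> inj_on (vstring V E f) V)"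

text \<open>The Petersen graph, as the Kneser graph K(5,2): vertices are the 2-subsets of
a 5-set, adjacent iff disjoint.\<close>
definition petersen_V :: "nat set set" where
  "petersen_V = {A. A \<subseteq> {0..<5} \<and> card A = 2}"

definition petersen_E :: "(nat set \<times> nat set) set" where
  "petersen_E = {(A, B). A \<in> petersen_V \<and> B \<in> petersen_V \<and> A \<inter> B = {}}"

end

theory Submission imports Defs begin

definition L :: "nat set list" where "L = [{0,1},{0,2},{0,3},{0,4},{1,2},{1,3},{1,4},{2,3},{2,4},{3,4}]"

lemma dL: "distinct L" unfolding L_def by (simp add: doubleton_eq_iff)

lemma VL: "petersen_V = set L"
proof
  show "petersen_V \<subseteq> set L"
    unfolding petersen_V_def
  proof
    fix A assume "A \<in> {A. A \<subseteq> {0..<5::nat} \<and> card A = 2}"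
    then obtain x y where "x \<noteq> y" "A = {x,y}" "x < 5" "y < 5" by (auto simp: card_2_iff)
    moreover have "x \<in> {0,1,2,3,4}" "y \<in> {0,1,2,3,4}" using \<open>x < 5\<close> \<open>y < 5\<close> by auto
    ultimately show "A \<in> set L" unfolding L_def by (auto simp: doubleton_eq_iff)
  qed
  show "set L \<subseteq> petersen_V" unfolding petersen_V_def L_def by auto
qed

lemma sum_filter_list:
  assumes "distinct xs"
  shows "sum f {x \<in> set xs. P x} = sum_list (map f (filter P xs))"
proof -
  have "{x \<in> set xs. P x} = set (filter P xs)" by simp
  then show ?thesis using assms by (simp add: sum.distinct_set_conv_list del: set_filter)
qed

lemma card_filter_list:
  assumes "distinct xs"
  shows "card {x \<in> set xs. P x} = length (filter P xs)"
proof -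
  have "{x \<in> set xs. P x} = set (filter P xs)" by simp
  then show ?thesis using assms by (simp add: distinct_card del: set_filter)
qed

lemma nonempty_V: "v \<in> petersen_V \<Longrightarrow> v \<noteq> {}"
  unfolding petersen_V_def by auto

lemma common_nb: "A \<in> petersen_V \<Longrightarrow> B \<in> petersen_V \<Longrightarrow> A \<noteq> B \<Longrightarrow> A \<inter> B \<noteq> {} \<Longrightarrow>
   \<exists>C\<in>petersen_V. A \<inter> C = {} \<and> B \<inter> C = {}"
proof -
  assume A: "A \<in> petersen_V" and B: "B \<in> petersen_V" and ne: "A \<noteq> B" and int: "A \<inter> B \<noteq> {}"
  have cA: "card A = 2" "A \<subseteq> {0..<5}" and cB: "card B = 2" "B \<subseteq> {0..<5}"
    using A B unfolding petersen_V_def by auto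
  have fA: "finite A" "finite B" using cA cB by (auto intro: finite_subset)
  have "A \<inter> B \<noteq> A"
  proof
    assume "A \<inter> B = A"
    then have "A \<subseteq> B" by blast
    then show False using card_subset_eq[OF fA(2)] cA cB ne by auto
  qed
  then have "A \<inter> B \<subset> A" by blast
  then have "card (A \<inter> B) < 2" using psubset_card_mono[OF fA(1)] cA by auto
  moreover have "card (A \<inter> B) > 0" using int fA by auto
  ultimately have c1: "card (A \<inter> B) = 1" by linarith
  have "card (A \<union> B) = 3" using card_Un_Int[OF fA] c1 cA cB by simp
  define C where "C = {0..<5} - (A \<union> B)"
  have "card C = 2" unfolding C_def
    using card_Diff_subset[of "A \<union> B" "{0..<5::nat}"] \<open>card (A \<union> B) = 3\<close> cA cB fA by auto
  then have "C \<in> petersen_V" unfolding petersen_V_def C_def by auto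
  moreover have "A \<inter> C = {} \<and> B \<inter> C = {}" unfolding C_def by auto
  ultimately show ?thesis by blast
qed

lemma gd:
  assumes A: "A \<in> petersen_V" and B: "B \<in> petersen_V"
  shows "gdist petersen_E A B = (if A = B then 0 else if A \<inter> B = {} then 1 else 2)"
proof (cases "A = B")
  case True
  then show ?thesis unfolding gdist_def by simp
next
  case ne: False
  show ?thesis
  proof (cases "A \<inter> B = {}")
    case True
    have "(LEAST n. (A, B) \<in> petersen_E ^^ n) = 1"
    proof (rule Least_equality)
      show "(A, B) \<in> petersen_E ^^ 1" using True A B by (simp add: petersen_E_def)
      fix n assume "(A, B) \<in> petersen_E ^^ n"
      then show "1 \<le> n" using ne by (cases n) auto
    qed
    then show ?thesis using ne True unfolding gdist_def by simp
  next
    case False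
    obtain C where C: "C \<in> petersen_V" "A \<inter> C = {}" "B \<inter> C = {}"
      using common_nb[OF A B ne False] by blast
    have "(LEAST n. (A, B) \<in> petersen_E ^^ n) = 2"
    proof (rule Least_equality)
      have "(A, C) \<in> petersen_E" "(C, B) \<in> petersen_E" using C A B by (auto simp: petersen_E_def)
      then have "(A, B) \<in> petersen_E O petersen_E" by (rule relcompI)
      then show "(A, B) \<in> petersen_E ^^ 2" by (simp add: numeral_2_eq_2)
      fix n assume n: "(A, B) \<in> petersen_E ^^ n"
      show "2 \<le> n"
      proof (rule ccontr)
        assume "\<not> 2 \<le> n"
        then have "n = 0 \<or> n = 1" by auto
        then show False using n ne False by (auto simp: petersen_E_def)
      qed
    qed
    then show ?thesis using ne False unfolding gdist_def by simp
  qed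
qed

lemma mem01: "{0,1} \<in> petersen_V" unfolding VL L_def by simp
lemma mem02: "{0,2} \<in> petersen_V" unfolding VL L_def by simp
lemma gd0102: "gdist petersen_E {0,1} {0,2} = 2"
proof -
  have "({0,1}::nat set) \<noteq> {0,2}" by (simp add: doubleton_eq_iff)
  moreover have "({0,1}::nat set) \<inter> {0,2} \<noteq> {}" by simp
  ultimately show ?thesis using gd[OF mem01 mem02] by simp
qed

lemma diam_sub: "{gdist petersen_E u v | u v. u \<in> petersen_V \<and> v \<in> petersen_V} \<subseteq> {0,1,2}"
proof
  fix x assume "x \<in> {gdist petersen_E u v | u v. u \<in> petersen_V \<and> v \<in> petersen_V}"
  then obtain u v where x: "x = gdist petersen_E u v" and uv: "u \<in> petersen_V" "v \<in> petersen_V" by blast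
  show "x \<in> {0,1,2}" unfolding x gd[OF uv] by simp
qed

lemma diam_fin: "finite {gdist petersen_E u v | u v. u \<in> petersen_V \<and> v \<in> petersen_V}"
  using diam_sub by (rule finite_subset) simp

lemma diam_two: "2 \<in> {gdist petersen_E u v | u v. u \<in> petersen_V \<and> v \<in> petersen_V}"
proof -
  have "gdist petersen_E {0,1} {0,2} = 2 \<and> {0,1} \<in> petersen_V \<and> {0,2} \<in> petersen_V"
    using gd0102 mem01 mem02 by simp
  then show ?thesis by (metis (mono_tags, lifting) mem_Collect_eq)
qed

lemma max012: "finite S \<Longrightarrow> S \<subseteq> {0,1,2::nat} \<Longrightarrow> 2 \<in> S \<Longrightarrow> Max S = 2"
  by (rule Max_eqI) auto

lemma diam: "diameter petersen_V petersen_E = 2"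
  unfolding diameter_def by (rule max012[OF diam_fin diam_sub diam_two])

lemma vstring_eq:
  assumes v: "v \<in> petersen_V"
  shows "vstring petersen_V petersen_E f v =
    [\<Sum>w\<in>{w\<in>petersen_V. v \<inter> w = {}}. f w, \<Sum>w\<in>{w\<in>petersen_V. w \<noteq> v \<and> v \<inter> w \<noteq> {}}. f w]"
proof -
  have "[1..<diameter petersen_V petersen_E + 1] = [1,2]" by (simp add: diam upt_rec)
  moreover have "{w\<in>petersen_V. gdist petersen_E v w = 1} = {w\<in>petersen_V. v \<inter> w = {}}"
  proof (rule Collect_cong)
    fix w show "(w \<in> petersen_V \<and> gdist petersen_E v w = 1) = (w \<in> petersen_V \<and> v \<inter> w = {})"
    proof (cases "w \<in> petersen_V")
      case True then show ?thesis using nonempty_V[OF v] gd[OF v True] by (cases "v = w") simp_all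
    qed simp
  qed
  moreover have "{w\<in>petersen_V. gdist petersen_E v w = 2} = {w\<in>petersen_V. w \<noteq> v \<and> v \<inter> w \<noteq> {}}"
  proof (rule Collect_cong)
    fix w show "(w \<in> petersen_V \<and> gdist petersen_E v w = 2) = (w \<in> petersen_V \<and> w \<noteq> v \<and> v \<inter> w \<noteq> {})"
    proof (cases "w \<in> petersen_V")
      case True then show ?thesis using gd[OF v True] by (cases "v = w") simp_all
    qed simp
  qed
  ultimately show ?thesis unfolding vstring_def by simp
qed


definition fP :: "nat set \<Rightarrow> real" where
  "fP A = (if (0 \<in> A \<and> 4 \<in> A) \<or> (1 \<in> A \<and> 3 \<in> A) then 1
     else if (1 \<in> A \<and> 4 \<in> A) \<or> (2 \<in> A \<and> 3 \<in> A) \<or> (3 \<in> A \<and> 4 \<in> A) then 2 else 0)"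

lemma card_fP: "card (fP ` petersen_V) = 3"
proof -
  have "fP ` petersen_V = set (map fP L)" unfolding VL by simp
  then show ?thesis by (simp only: card_set) (simp add: L_def fP_def)
qed

lemma inj_fP: "inj_on (vstring petersen_V petersen_E fP) petersen_V"
proof -
  have "map (vstring petersen_V petersen_E fP) L =
    map (\<lambda>v. [sum_list (map fP (filter (\<lambda>w. v \<inter> w = {}) L)),
              sum_list (map fP (filter (\<lambda>w. w \<noteq> v \<and> v \<inter> w \<noteq> {}) L))]) L"
  proof (rule map_cong[OF refl])
    fix v assume "v \<in> set L"
    then have v: "v \<in> petersen_V" unfolding VL .
    show "vstring petersen_V petersen_E fP v = [sum_list (map fP (filter (\<lambda>w. v \<inter> w = {}) L)),
              sum_list (map fP (filter (\<lambda>w. w \<noteq> v \<and> v \<inter> w \<noteq> {}) L))]"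
      unfolding vstring_eq[OF v] unfolding VL using sum_filter_list[OF dL, of fP "\<lambda>w. v \<inter> w = {}"]
        sum_filter_list[OF dL, of fP "\<lambda>w. w \<noteq> v \<and> v \<inter> w \<noteq> {}"] by simp
  qed
  moreover have "distinct (map (\<lambda>v. [sum_list (map fP (filter (\<lambda>w. v \<inter> w = {}) L)),
              sum_list (map fP (filter (\<lambda>w. w \<noteq> v \<and> v \<inter> w \<noteq> {}) L))]) L)"
    by (simp add: L_def fP_def doubleton_eq_iff)
  ultimately have "distinct (map (vstring petersen_V petersen_E fP) L)" by metis
  then show ?thesis unfolding VL distinct_map by simp
qed


lemma card_nb: "v \<in> petersen_V \<Longrightarrow> card {w \<in> petersen_V. v \<inter> w = {}} = 3"
proof -
  have "\<forall>v\<in>set L. length (filter (\<lambda>w. v \<inter> w = {}) L) = 3" by (simp add: L_def)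
  then show "v \<in> petersen_V \<Longrightarrow> ?thesis" unfolding VL using card_filter_list[OF dL] by simp
qed

lemma le2: "finite S \<Longrightarrow> card S \<le> 2 \<Longrightarrow> \<exists>a b. S \<subseteq> {a, b}"
proof -
  assume fS: "finite S" and c: "card S \<le> 2"
  show ?thesis
  proof (cases "S = {}")
    case True then show ?thesis by blast
  next
    case False
    then obtain a where a: "a \<in> S" by blast
    have "card (S - {a}) \<le> Suc 0" using c a fS by simp
    then have "\<forall>x\<in>S - {a}. \<forall>y\<in>S - {a}. x = y" using fS by (simp add: card_le_Suc0_iff_eq)
    then show ?thesis by blast
  qed
qed

lemma lower:
  assumes inj: "inj_on (vstring petersen_V petersen_E f) petersen_V"
  shows "3 \<le> card (f ` petersen_V)"
proof (rule ccontr)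
  assume "\<not> 3 \<le> card (f ` petersen_V)"
  moreover have finV: "finite petersen_V" unfolding VL by simp
  ultimately obtain a b where ab: "f ` petersen_V \<subseteq> {a, b}" using le2[of "f ` petersen_V"] by force
  define N where "N v = {w\<in>petersen_V. v \<inter> w = {}}" for v
  define D where "D v = {w\<in>petersen_V. w \<noteq> v \<and> v \<inter> w \<noteq> {}}" for v
  define n where "n v = card {w\<in>N v. f w = b}" for v
  define T where "T = sum f petersen_V"
  define G where "G x m = [a * real (3 - m) + b * real m, T - x - (a * real (3 - m) + b * real m)]" for x m
  have nle: "n v \<le> 3" if v: "v \<in> petersen_V" for v
  proof -
    have "n v \<le> card (N v)" unfolding n_def N_def by (rule card_mono) (use finV in auto)
    then show ?thesis using card_nb[OF v] unfolding N_def by simp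
  qed
  have str: "vstring petersen_V petersen_E f v = G (f v) (n v)" if v: "v \<in> petersen_V" for v
  proof -
    have finN: "finite (N v)" unfolding N_def using finV by simp
    have cN: "card (N v) = 3" using card_nb[OF v] unfolding N_def .
    let ?B = "{w\<in>N v. f w = b}" and ?A = "{w\<in>N v. f w \<noteq> b}"
    have fB: "finite ?B" "finite ?A" using finN by auto
    have disjBA: "?B \<inter> ?A = {}" by blast
    have eBA: "?B \<union> ?A = N v" by blast
    have cAB: "card ?A = 3 - n v"
    proof -
      have "card (N v) = card ?B + card ?A"
        using card_Un_disjoint[OF fB disjBA] unfolding eBA .
      then show ?thesis unfolding n_def using cN by linarith
    qed
    have "sum f ?B = sum (\<lambda>_. b) ?B" by (rule sum.cong) auto
    then have sB: "sum f ?B = b * real (n v)" unfolding n_def by simp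
    have "sum f ?A = sum (\<lambda>_. a) ?A"
    proof (rule sum.cong[OF refl])
      fix w assume "w \<in> ?A"
      then have "f w \<in> {a, b}" "f w \<noteq> b" using ab unfolding N_def by auto
      then show "f w = a" by auto
    qed
    then have sA: "sum f ?A = a * real (3 - n v)" using cAB by simp
    have Nsum: "sum f (N v) = a * real (3 - n v) + b * real (n v)"
    proof -
      have "sum f (N v) = sum f ?B + sum f ?A"
        using sum.union_disjoint[OF fB disjBA, of f] unfolding eBA .
      then show ?thesis using sA sB by simp
    qed
    have vnot: "v \<notin> N v \<union> D v" using nonempty_V[OF v] unfolding N_def D_def by auto
    have Veq: "petersen_V = insert v (N v \<union> D v)" using v unfolding N_def D_def by auto
    have finD: "finite (D v)" unfolding D_def using finV by simp
    have disj: "N v \<inter> D v = {}" unfolding N_def D_def by auto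
    have "T = f v + (sum f (N v) + sum f (D v))"
      unfolding T_def
      by (subst Veq, subst sum.insert) (use finN finD vnot disj sum.union_disjoint[OF finN finD] in auto)
    then have Dsum: "sum f (D v) = T - f v - sum f (N v)" by simp
    show ?thesis
      unfolding vstring_eq[OF v] G_def
      using Nsum Dsum unfolding N_def D_def by simp
  qed
  have inj2: "inj_on (\<lambda>v. (f v, n v)) petersen_V"
  proof (rule inj_onI)
    fix v w assume v: "v \<in> petersen_V" and w: "w \<in> petersen_V" and e: "(f v, n v) = (f w, n w)"
    then have "vstring petersen_V petersen_E f v = vstring petersen_V petersen_E f w"
      using str[OF v] str[OF w] by simp
    then show "v = w" by (rule inj_onD[OF inj _ v w])
  qed
  have img: "(\<lambda>v. (f v, n v)) ` petersen_V \<subseteq> {a, b} \<times> {0..3}"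
    using ab nle by auto
  have "card petersen_V \<le> card ({a, b} \<times> {0..3::nat})"
    by (rule card_inj_on_le[OF inj2 img]) simp
  also have "\<dots> = card {a, b} * 4" by (simp add: card_cartesian_product)
  also have "\<dots> \<le> 8" by (cases "a = b") simp_all
  finally have "card petersen_V \<le> 8" .
  moreover have "card petersen_V = 10" unfolding VL distinct_card[OF dL] by (simp add: L_def)
  ultimately show False by simp
qed

theorem mainTheorem10:
  shows "IDI petersen_V petersen_E = 3"
  unfolding IDI_def
proof (rule Least_equality)
  show "\<exists>f :: nat set \<Rightarrow> real. card (f ` petersen_V) = 3 \<and> inj_on (vstring petersen_V petersen_E f) petersen_V"
    using card_fP inj_fP by blast
  fix k assume "\<exists>f :: nat set \<Rightarrow> real. card (f ` petersen_V) = k \<and> inj_on (vstring petersen_V petersen_E f) petersen_V"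
  then show "3 \<le> k" using lower by blast
qed

end
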